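(* Let $\Pi$ be a homogeneous Poisson point process in $\mathbb{R}^2$ of unit intensity. Let $A=(-1/2,0)$, $B=(1/2,0)$, and let $C$ be the point of $\Pi$ nearest to $(0,0)$. Let $\alpha$ be the interior angle of triangle $ABC$ at $B=(1/2,0)$ and $\beta$ the interior angle at $A=(-1/2,0)$. Then the joint density of $(\alpha,\beta)$ is \[ 2\exp\!\left[-\frac{\pi}{4}\frac{\sin(x-y)^2+4\sin(x)^2\sin(y)^2}{\sin(x+y)^2}\right]\frac{\sin(x)\sin(y)}{\sin(x+y)^3}\quad\text{for } x>0,\ y>0,\ x+y<\pi, \] and $0$ otherwise.
   Context: The triangle $ABC$ so defined is called an anchored Poissonian triangle. For $C=(u,v)$ with $v>0$, $\tan\alpha=2v/(1-2u)$ and $\tan\beta=2v/(1+2u)$. *)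

theory Defs
  imports "HOL-Probability.Probability"
begin

definition count_in :: "('w \<Rightarrow> (real \<times> real) set) \<Rightarrow> (real \<times> real) set \<Rightarrow> 'w \<Rightarrow> nat" where
  "count_in PP B = (\<lambda>w. card (PP w \<inter> B))"

definition unit_poisson_pp :: "'w measure \<Rightarrow> ('w \<Rightarrow> (real \<times> real) set) \<Rightarrow> bool" where
  "unit_poisson_pp M PP \<longleftrightarrow>
     prob_space M \<and>
     (\<forall>w\<in>space M. \<forall>K. compact K \<longrightarrow> finite (PP w \<inter> K)) \<and>
     (\<forall>B \<in> sets borel. bounded B \<longrightarrow>
        count_in PP B \<in> measurable M (count_space UNIV) \<and>
        (\<forall>k::nat. measure M {w \<in> space M. count_in PP B w = k}
                  = measure lborel B ^ k / fact k * exp (- measure lborel B))) \<and>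
     (\<forall>(I::nat set) Bs. finite I \<longrightarrow> (\<forall>i\<in>I. Bs i \<in> sets borel \<and> bounded (Bs i)) \<longrightarrow>
        disjoint_family_on Bs I \<longrightarrow>
        prob_space.indep_vars M (\<lambda>_. count_space UNIV) (\<lambda>i. count_in PP (Bs i)) I)"

text \<open>The point of PP w nearest to the origin (well defined almost surely; arbitrary
  otherwise).\<close>

definition nearest_point :: "('w \<Rightarrow> (real \<times> real) set) \<Rightarrow> 'w \<Rightarrow> real \<times> real" where
  "nearest_point PP w = (THE c. c \<in> PP w \<and> (\<forall>d\<in>PP w. d \<noteq> c \<longrightarrow> norm c < norm d))"

definition vertex_angle :: "real \<times> real \<Rightarrow> real \<times> real \<Rightarrow> real \<times> real \<Rightarrow> real" where
  "vertex_angle P Q R = arccos (((Q - P) \<bullet> (R - P)) / (norm (Q - P) * norm (R - P)))"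

definition ptA :: "real \<times> real" where "ptA = (-1/2, 0)"
definition ptB :: "real \<times> real" where "ptB = (1/2, 0)"

definition anchored_density :: "real \<times> real \<Rightarrow> real" where
  "anchored_density z = (case z of (x, y) \<Rightarrow>
     if 0 < x \<and> 0 < y \<and> x + y < pi then
       2 * exp (- (pi / 4) * ((sin (x - y))\<^sup>2 + 4 * (sin x)\<^sup>2 * (sin y)\<^sup>2) / (sin (x + y))\<^sup>2)
         * sin x * sin y / (sin (x + y)) ^ 3
     else 0)"

end

theory Submission
  imports Defs
begin

definition gs :: "real \<times> real \<Rightarrow> real" where
  "gs c = exp (- pi * (fst c ^ 2 + snd c ^ 2))"

lemma gs_1d: "exp (- pi * x^2) = normal_density 0 (1 / sqrt (2*pi)) x"
  by (simp add: normal_density_def power_divide power_mult_distrib)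

lemma nn_gauss_1d: "(\<integral>\<^sup>+x. ennreal (exp (- pi * x^2)) \<partial>lborel) = 1"
proof -
  have "(\<integral>\<^sup>+x. ennreal (exp (- pi * x^2)) \<partial>lborel) = (\<integral>\<^sup>+x. ennreal (normal_density 0 (1 / sqrt (2*pi)) x) \<partial>lborel)"
    by (simp add: gs_1d[symmetric])
  also have "\<dots> = ennreal (\<integral>x. normal_density 0 (1 / sqrt (2*pi)) x \<partial>lborel)"
    by (rule nn_integral_eq_integral) auto
  finally show ?thesis by simp
qed

lemma gs_measurable[measurable]: "gs \<in> borel_measurable borel"
  unfolding gs_def by (intro borel_measurable_continuous_onI continuous_intros)

lemma nn_gs: "(\<integral>\<^sup>+c. ennreal (gs c) \<partial>lborel) = 1"
proof -
  have "(\<integral>\<^sup>+c. ennreal (gs c) \<partial>lborel) = (\<integral>\<^sup>+c. ennreal (gs c) \<partial>(lborel \<Otimes>\<^sub>M lborel))"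
    by (simp add: lborel_prod)
  also have "\<dots> = (\<integral>\<^sup>+x. \<integral>\<^sup>+y. ennreal (gs (x,y)) \<partial>lborel \<partial>lborel)"
    by (rule sigma_finite_measure.nn_integral_fst[OF sigma_finite_lborel, symmetric]) (simp add: lborel_prod)
  also have "\<dots> = (\<integral>\<^sup>+x. ennreal (exp (- pi * x^2)) * \<integral>\<^sup>+y. ennreal (exp (- pi * y^2)) \<partial>lborel \<partial>lborel)"
    by (subst nn_integral_cmult[symmetric]) (auto simp: gs_def ennreal_mult' [symmetric] exp_add[symmetric] algebra_simps intro!: nn_integral_cong)
  also have "\<dots> = 1" using nn_gauss_1d by simp
  finally show ?thesis .
qed

definition Qn :: "(real \<times> real) set \<Rightarrow> real \<times> real \<Rightarrow> bool" where
  "Qn P c \<longleftrightarrow> c \<in> P \<and> (\<forall>d\<in>P. d \<noteq> c \<longrightarrow> norm c < norm d)"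

lemma nearest_point_Qn: "nearest_point PP w = The (Qn (PP w))"
  unfolding nearest_point_def Qn_def by simp

lemma Qn_unique: "Qn P c \<Longrightarrow> Qn P d \<Longrightarrow> c = d"
  unfolding Qn_def by force

lemma Qn_The: "Qn P c \<Longrightarrow> The (Qn P) = c"
  using Qn_unique by (metis theI)

lemma not_Qn_The: "\<not> (\<exists>c. Qn P c) \<Longrightarrow> The (Qn P) = The (\<lambda>_. False)"
proof -
  assume "\<not> (\<exists>c. Qn P c)"
  then have "Qn P = (\<lambda>_. False)" by auto
  then show ?thesis by simp
qed

definition dsk :: "nat \<Rightarrow> nat \<Rightarrow> (real \<times> real) set" where
  "dsk n k = ball 0 (sqrt (real k / real n))"

definition rng :: "nat \<Rightarrow> nat \<Rightarrow> (real \<times> real) set" where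
  "rng n k = dsk n (Suc k) - dsk n k"

lemma lt_sqrt_iff: "0 \<le> a \<Longrightarrow> a < sqrt x \<longleftrightarrow> a^2 < x"
  by (metis abs_of_nonneg real_sqrt_abs real_sqrt_less_iff)

lemma mem_dsk: "n > 0 \<Longrightarrow> c \<in> dsk n k \<longleftrightarrow> norm c ^ 2 < real k / real n"
  unfolding dsk_def by (simp add: lt_sqrt_iff)

lemma mem_rng: "n > 0 \<Longrightarrow> c \<in> rng n k \<longleftrightarrow> real k / real n \<le> norm c ^ 2 \<and> norm c ^ 2 < real (Suc k) / real n"
  unfolding rng_def using mem_dsk[of n] by auto

lemma dsk_borel[measurable]: "dsk n k \<in> sets borel"
  unfolding dsk_def by simp
lemma rng_borel[measurable]: "rng n k \<in> sets borel"
  unfolding rng_def by simp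
lemma dsk_bounded: "bounded (dsk n k)"
  unfolding dsk_def by simp
lemma rng_bounded: "bounded (rng n k)"
  unfolding rng_def using dsk_bounded by (simp add: bounded_diff)

definition locfin :: "(real \<times> real) set \<Rightarrow> bool" where
  "locfin P \<longleftrightarrow> (\<forall>K. compact K \<longrightarrow> finite (P \<inter> K))"

lemma locfin_bounded: "locfin P \<Longrightarrow> bounded B \<Longrightarrow> finite (P \<inter> B)"
proof -
  assume lf: "locfin P" and b: "bounded B"
  have "compact (closure B)" using b by (simp add: compact_closure)
  then have "finite (P \<inter> closure B)" using lf unfolding locfin_def by blast
  then show ?thesis by (rule rev_finite_subset) (use closure_subset in blast)
qed

lemma det_a:
  assumes lf: "locfin P" and n: "n > 0"
    and c0: "card (P \<inter> (dsk n k \<union> (rng n k - S))) = 0"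
    and c1: "card (P \<inter> (rng n k \<inter> S)) = 1"
  shows "(\<exists>c. Qn P c) \<and> The (Qn P) \<in> S"
proof -
  have fin0: "finite (P \<inter> (dsk n k \<union> (rng n k - S)))"
    by (rule locfin_bounded[OF lf]) (use dsk_bounded rng_bounded in \<open>auto intro: bounded_subset\<close>)
  then have e0: "P \<inter> (dsk n k \<union> (rng n k - S)) = {}" using c0 by simp
  from c1 obtain c where ec: "P \<inter> (rng n k \<inter> S) = {c}" by (auto simp: card_Suc_eq)
  have cP: "c \<in> P" and cR: "c \<in> rng n k" and cS: "c \<in> S" using ec by auto
  have "Qn P c" unfolding Qn_def
  proof (intro conjI ballI impI)
    fix d assume dP: "d \<in> P" and dc: "d \<noteq> c"
    have "d \<notin> dsk n k" using e0 dP by auto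
    moreover have "d \<notin> rng n k"
      using e0 ec dP dc by auto
    ultimately have "real (Suc k) / real n \<le> norm d ^ 2"
      using mem_dsk[OF n, of d] mem_rng[OF n, of d] by auto
    moreover have "norm c ^ 2 < real (Suc k) / real n" using cR mem_rng[OF n] by auto
    ultimately have "norm c ^ 2 < norm d ^ 2" by linarith
    then show "norm c < norm d" by (simp add: power_less_imp_less_base)
  qed (rule cP)
  then show ?thesis using Qn_The[OF \<open>Qn P c\<close>] cS by blast
qed

lemma det_b:
  assumes lf: "locfin P" and q: "Qn P c" and cS: "c \<in> S"
  shows "\<exists>n>0. \<exists>k. card (P \<inter> (dsk n k \<union> (rng n k - S))) = 0 \<and> card (P \<inter> (rng n k \<inter> S)) = 1"
proof -
  define K where "K = P \<inter> cball 0 (norm c + 1) - {c}"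
  have finK: "finite K" unfolding K_def using locfin_bounded[OF lf, of "cball 0 (norm c + 1)"] by auto
  define \<delta> where "\<delta> = Min (insert 1 ((\<lambda>d. norm d ^ 2 - norm c ^ 2) ` K))"
  have dpos: "\<delta> > 0" unfolding \<delta>_def
  proof (subst Min_gr_iff)
    show "\<forall>a\<in>insert 1 ((\<lambda>d. (norm d)\<^sup>2 - (norm c)\<^sup>2) ` K). 0 < a"
    proof
      fix a assume "a \<in> insert 1 ((\<lambda>d. (norm d)\<^sup>2 - (norm c)\<^sup>2) ` K)"
      then consider "a = 1" | d where "d \<in> K" "a = norm d ^ 2 - norm c ^ 2" by auto
      then show "0 < a"
      proof cases
        case 2
        then have "norm c < norm d" using q unfolding Qn_def K_def by auto
        then have "norm c ^ 2 < norm d ^ 2" by (simp add: power_strict_mono)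
        then show ?thesis using 2 by simp
      qed simp
    qed
  qed (use finK in auto)
  have dle1: "\<delta> \<le> 1" unfolding \<delta>_def using finK by simp
  have dleK: "\<delta> \<le> norm d ^ 2 - norm c ^ 2" if "d \<in> K" for d
    unfolding \<delta>_def using finK that by simp
  obtain n :: nat where n: "1 / \<delta> < real n" using reals_Archimedean2 by blast
  have npos: "n > 0" using n dpos by (metis divide_pos_pos of_nat_0_less_iff order.strict_trans zero_less_one)
  have invn: "1 / real n < \<delta>" using n dpos npos by (simp add: divide_less_eq mult.commute)
  define k where "k = nat \<lfloor>real n * norm c ^ 2\<rfloor>"
  have kfl: "real k = of_int \<lfloor>real n * norm c ^ 2\<rfloor>" unfolding k_def by simp
  have k1: "real k / real n \<le> norm c ^ 2"
    using npos kfl by (simp add: divide_le_eq mult.commute)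
  have k2: "norm c ^ 2 < real (Suc k) / real n"
  proof -
    have "real n * norm c ^ 2 < real k + 1" using kfl by linarith
    then show ?thesis using npos by (simp add: less_divide_eq mult.commute)
  qed
  have k3: "real (Suc k) / real n \<le> norm c ^ 2 + 1 / real n"
  proof -
    have "real k / real n + 1 / real n = real (Suc k) / real n" by (simp add: add_divide_distrib)
    then show ?thesis using k1 by linarith
  qed
  have cR: "c \<in> rng n k" using mem_rng[OF npos] k1 k2 by simp
  have only: "d = c" if "d \<in> P" "d \<in> dsk n (Suc k)" for d
  proof (rule ccontr)
    assume dc: "d \<noteq> c"
    have "norm d ^ 2 < real (Suc k) / real n" using that(2) mem_dsk[OF npos] by blast
    then have d2: "norm d ^ 2 < norm c ^ 2 + \<delta>" using k3 invn by linarith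
    have "norm d ^ 2 < (norm c + 1) ^ 2"
    proof -
      have "norm c ^ 2 + 1 \<le> (norm c + 1) ^ 2" by (simp add: power2_sum)
      then show ?thesis using d2 dle1 by linarith
    qed
    then have "norm d < norm c + 1" by (rule power_less_imp_less_base) simp
    then have "d \<in> K" unfolding K_def using that dc by auto
    then show False using dleK[of d] d2 by linarith
  qed
  have sub: "dsk n k \<subseteq> dsk n (Suc k)"
  proof
    fix x assume "x \<in> dsk n k"
    then have "norm x ^ 2 < real k / real n" using mem_dsk[OF npos] by blast
    also have "\<dots> \<le> real (Suc k) / real n" by (simp add: divide_right_mono)
    finally show "x \<in> dsk n (Suc k)" using mem_dsk[OF npos] by blast
  qed
  have cnd: "c \<notin> dsk n k" using cR unfolding rng_def by blast
  have "P \<inter> (dsk n k \<union> (rng n k - S)) = {}"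
  proof (rule ccontr)
    assume "P \<inter> (dsk n k \<union> (rng n k - S)) \<noteq> {}"
    then obtain d where d: "d \<in> P" "d \<in> dsk n k \<union> (rng n k - S)" by blast
    then have "d \<in> dsk n (Suc k)" using sub unfolding rng_def by blast
    then have "d = c" using only d(1) by blast
    then show False using d(2) cnd cS by blast
  qed
  moreover have "P \<inter> (rng n k \<inter> S) = {c}"
    using only cS cR q unfolding Qn_def rng_def by auto
  ultimately show ?thesis using npos by (intro exI[of _ n] conjI exI[of _ k]) simp_all
qed


locale upp =
  fixes M :: "'w measure" and PP :: "'w \<Rightarrow> (real \<times> real) set"
  assumes upp: "unit_poisson_pp M PP"

sublocale upp \<subseteq> prob_space M
  using upp unfolding unit_poisson_pp_def by blast

context upp begin

lemma lf: "w \<in> space M \<Longrightarrow> locfin (PP w)"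
  using upp unfolding unit_poisson_pp_def locfin_def by blast

lemma cnt_set: "B \<in> sets borel \<Longrightarrow> bounded B \<Longrightarrow> {w\<in>space M. count_in PP B w = j} \<in> events"
proof -
  assume "B \<in> sets borel" "bounded B"
  then have m: "count_in PP B \<in> measurable M (count_space UNIV)"
    using upp unfolding unit_poisson_pp_def by blast
  have "count_in PP B -` {j} \<inter> space M \<in> sets M"
    by (rule measurable_sets[OF m]) simp
  moreover have "count_in PP B -` {j} \<inter> space M = {w\<in>space M. count_in PP B w = j}" by auto
  ultimately show ?thesis by simp
qed

lemma cnt_prob: "B \<in> sets borel \<Longrightarrow> bounded B \<Longrightarrow>
   prob {w\<in>space M. count_in PP B w = j} = measure lborel B ^ j / fact j * exp (- measure lborel B)"
  using upp unfolding unit_poisson_pp_def by blast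

lemma cnt_indep:
  assumes A: "A \<in> sets borel" "bounded A" and D: "D \<in> sets borel" "bounded D" and AD: "A \<inter> D = {}"
  shows "prob {w\<in>space M. count_in PP A w = i \<and> count_in PP D w = j} =
         prob {w\<in>space M. count_in PP A w = i} * prob {w\<in>space M. count_in PP D w = j}"
proof -
  define Bs where "Bs = (\<lambda>l::nat. if l = 0 then A else D)"
  define V where "V = (\<lambda>l::nat. if l = 0 then {i} else {j})"
  have ind: "indep_vars (\<lambda>_. count_space UNIV) (\<lambda>l. count_in PP (Bs l)) {0,1}"
  proof -
    have "finite {0::nat,1}" by simp
    moreover have "\<forall>l\<in>{0::nat,1}. Bs l \<in> sets borel \<and> bounded (Bs l)" using A D by (auto simp: Bs_def)
    moreover have "disjoint_family_on Bs {0,1}" using AD by (auto simp: disjoint_family_on_def Bs_def)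
    ultimately show ?thesis using upp unfolding unit_poisson_pp_def by blast
  qed
  have "prob (\<Inter>l\<in>{0,1}. (\<lambda>l. count_in PP (Bs l)) l -` V l \<inter> space M) =
        (\<Prod>l\<in>{0,1}. prob ((\<lambda>l. count_in PP (Bs l)) l -` V l \<inter> space M))"
    by (rule indep_varsD_finite[OF ind]) auto
  moreover have "(\<Inter>l\<in>{0::nat,1}. (\<lambda>l. count_in PP (Bs l)) l -` V l \<inter> space M) =
     {w\<in>space M. count_in PP A w = i \<and> count_in PP D w = j}"
    by (auto simp: Bs_def V_def)
  moreover have "(\<lambda>l. count_in PP (Bs l)) 0 -` V 0 \<inter> space M = {w\<in>space M. count_in PP A w = i}"
    by (auto simp: Bs_def V_def)
  moreover have "(\<lambda>l. count_in PP (Bs l)) 1 -` V 1 \<inter> space M = {w\<in>space M. count_in PP D w = j}"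
    by (auto simp: Bs_def V_def)
  ultimately show ?thesis by simp
qed

end

lemma measure_dsk: "n > 0 \<Longrightarrow> measure lborel (dsk n k) = pi * real k / real n"
  unfolding dsk_def by (simp add: content_ball unit_ball_vol_2)

lemma dsk_mono: "n > 0 \<Longrightarrow> k \<le> k' \<Longrightarrow> dsk n k \<subseteq> dsk n k'"
  unfolding dsk_def by (intro subset_ball real_sqrt_le_mono divide_right_mono) auto

lemma fin_emeasure_bounded: "B \<in> sets borel \<Longrightarrow> bounded B \<Longrightarrow> emeasure lborel B \<noteq> \<infinity>"
  using emeasure_bounded_finite by (metis less_irrefl)

definition LS where
  "LS M PP n k S = {w\<in>space M. count_in PP (dsk n k \<union> (rng n k - S)) w = 0 \<and> count_in PP (rng n k \<inter> S) w = 1}"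

context upp begin

lemma LS_events: "S \<in> sets borel \<Longrightarrow> LS M PP n k S \<in> events"
proof -
  assume [measurable]: "S \<in> sets borel"
  have b1: "bounded (dsk n k \<union> (rng n k - S))" using dsk_bounded rng_bounded by (auto intro: bounded_subset)
  have b2: "bounded (rng n k \<inter> S)" using rng_bounded by (auto intro: bounded_subset)
  have "LS M PP n k S = {w\<in>space M. count_in PP (dsk n k \<union> (rng n k - S)) w = 0} \<inter> {w\<in>space M. count_in PP (rng n k \<inter> S) w = 1}"
    unfolding LS_def by auto
  then show ?thesis using cnt_set[OF _ b1, of 0] cnt_set[OF _ b2, of 1] by auto
qed

lemma LS_prob:
  assumes [measurable]: "S \<in> sets borel" and n: "n > 0"
  shows "prob (LS M PP n k S) = exp (- pi * real (Suc k) / real n) * measure lborel (rng n k \<inter> S)"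
proof -
  define A where "A = dsk n k \<union> (rng n k - S)"
  define D where "D = rng n k \<inter> S"
  have [measurable]: "A \<in> sets borel" "D \<in> sets borel" unfolding A_def D_def by auto
  have bA: "bounded A" using dsk_bounded rng_bounded by (auto simp: A_def intro: bounded_subset)
  have bD: "bounded D" using rng_bounded by (auto simp: D_def intro: bounded_subset)
  have AD: "A \<inter> D = {}" unfolding A_def D_def rng_def by auto
  have AuD: "A \<union> D = dsk n (Suc k)" unfolding A_def D_def rng_def using dsk_mono[OF n, of k "Suc k"] by auto
  have mAD: "measure lborel A + measure lborel D = pi * real (Suc k) / real n"
  proof -
    have "measure lborel (A \<union> D) = measure lborel A + measure lborel D"
      by (rule measure_Union) (use fin_emeasure_bounded[of A] fin_emeasure_bounded[of D] bA bD AD in auto)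
    then show ?thesis using AuD measure_dsk[OF n] by simp
  qed
  have "prob (LS M PP n k S) = prob {w\<in>space M. count_in PP A w = 0 \<and> count_in PP D w = 1}"
    unfolding LS_def A_def D_def by simp
  also have "\<dots> = prob {w\<in>space M. count_in PP A w = 0} * prob {w\<in>space M. count_in PP D w = 1}"
    by (rule cnt_indep) (use bA bD AD in auto)
  also have "\<dots> = exp (- measure lborel A) * (measure lborel D * exp (- measure lborel D))"
    using cnt_prob[of A 0] cnt_prob[of D 1] bA bD by simp
  also have "\<dots> = exp (- (measure lborel A + measure lborel D)) * measure lborel D"
    by (simp add: exp_add[symmetric] exp_minus field_simps)
  also have "\<dots> = exp (- pi * real (Suc k) / real n) * measure lborel (rng n k \<inter> S)"
    using mAD by (simp add: D_def)
  finally show ?thesis .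
qed

end

context upp begin

abbreviation "good w \<equiv> (\<exists>c. Qn (PP w) c)"

lemma LS_good:
  assumes w: "w \<in> LS M PP (Suc n) k S"
  shows "good w \<and> nearest_point PP w \<in> S"
proof -
  have ws: "w \<in> space M" using w unfolding LS_def by auto
  show ?thesis
    using det_a[OF lf[OF ws], of "Suc n" k S] w unfolding LS_def count_in_def nearest_point_Qn by auto
qed

lemma good_LS:
  assumes ws: "w \<in> space M" and g: "good w" and S: "nearest_point PP w \<in> S"
  shows "\<exists>n k. w \<in> LS M PP (Suc n) k S"
proof -
  obtain c where c: "Qn (PP w) c" using g by blast
  then have "nearest_point PP w = c" unfolding nearest_point_Qn by (rule Qn_The)
  then obtain n k where n: "n > 0" and
     h: "card (PP w \<inter> (dsk n k \<union> (rng n k - S))) = 0 \<and> card (PP w \<inter> (rng n k \<inter> S)) = 1"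
    using det_b[OF lf[OF ws] c, of S] S by auto
  then obtain m where "n = Suc m" by (cases n) auto
  then show ?thesis using h ws unfolding LS_def count_in_def by auto
qed

definition c0 :: "real \<times> real" where "c0 = The (\<lambda>_. False)"

lemma bad_C: "\<not> good w \<Longrightarrow> nearest_point PP w = c0"
  unfolding nearest_point_Qn c0_def by (rule not_Qn_The)

lemma C_set:
  "{w\<in>space M. nearest_point PP w \<in> S} =
     (\<Union>n. \<Union>k. LS M PP (Suc n) k S) \<union> (if c0 \<in> S then space M - (\<Union>n. \<Union>k. LS M PP (Suc n) k UNIV) else {})"
  (is "?L = ?R")
proof
  show "?L \<subseteq> ?R"
  proof
    fix w assume "w \<in> ?L"
    then have ws: "w \<in> space M" and wS: "nearest_point PP w \<in> S" by auto
    show "w \<in> ?R"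
    proof (cases "good w")
      case True
      then obtain n k where "w \<in> LS M PP (Suc n) k S" using good_LS[OF ws True wS] by blast
      then show ?thesis by blast
    next
      case False
      have nin: "w \<notin> (\<Union>n. \<Union>k. LS M PP (Suc n) k UNIV)"
      proof
        assume "w \<in> (\<Union>n. \<Union>k. LS M PP (Suc n) k UNIV)"
        then obtain n k where "w \<in> LS M PP (Suc n) k UNIV" by blast
        then show False using LS_good False by blast
      qed
      have "c0 \<in> S" using bad_C[OF False] wS by simp
      then show ?thesis using nin ws by simp
    qed
  qed
next
  show "?R \<subseteq> ?L"
  proof
    fix w assume w: "w \<in> ?R"
    show "w \<in> ?L"
    proof (cases "w \<in> (\<Union>n. \<Union>k. LS M PP (Suc n) k S)")
      case True
      then obtain n k where wL: "w \<in> LS M PP (Suc n) k S" by blast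
      then have "w \<in> space M" unfolding LS_def by blast
      then show ?thesis using LS_good[OF wL] by blast
    next
      case False
      then have h: "c0 \<in> S \<and> w \<in> space M \<and> w \<notin> (\<Union>n. \<Union>k. LS M PP (Suc n) k UNIV)"
        using w by (cases "c0 \<in> S") simp_all
      have "\<not> good w"
      proof
        assume "good w"
        then obtain n k where "w \<in> LS M PP (Suc n) k UNIV" using good_LS[of w UNIV] h by blast
        then show False using h by blast
      qed
      then show ?thesis using bad_C h by simp
    qed
  qed
qed

lemma C_set_events: "S \<in> sets borel \<Longrightarrow> {w\<in>space M. nearest_point PP w \<in> S} \<in> events"
proof -
  assume S: "S \<in> sets borel"
  have "(\<Union>n. \<Union>k. LS M PP (Suc n) k S) \<in> events" using LS_events[OF S] by auto
  moreover have "(\<Union>n. \<Union>k. LS M PP (Suc n) k UNIV) \<in> events" using LS_events[of UNIV] by auto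
  ultimately show ?thesis unfolding C_set by auto
qed

lemma C_measurable: "nearest_point PP \<in> measurable M lborel"
proof -
  have "nearest_point PP \<in> borel_measurable M"
  proof (rule borel_measurableI)
    fix S :: "(real \<times> real) set" assume "open S"
    then have "S \<in> sets borel" by simp
    then have "{w\<in>space M. nearest_point PP w \<in> S} \<in> events" by (rule C_set_events)
    moreover have "nearest_point PP -` S \<inter> space M = {w\<in>space M. nearest_point PP w \<in> S}" by auto
    ultimately show "nearest_point PP -` S \<inter> space M \<in> sets M" by simp
  qed
  then show ?thesis by simp
qed

end

lemma norm_sq_pair: "norm (c :: real \<times> real) ^ 2 = fst c ^ 2 + snd c ^ 2"
  by (cases c) (simp add: norm_Pair)

lemma gs_norm: "gs c = exp (- pi * norm c ^ 2)"
  unfolding gs_def norm_sq_pair ..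

lemma rng_disj: "n > 0 \<Longrightarrow> disjoint_family (rng n)"
proof (unfold disjoint_family_on_def, intro ballI impI)
  fix k k' :: nat assume n: "n > 0" and kk: "k \<noteq> k'"
  show "rng n k \<inter> rng n k' = {}"
  proof (rule ccontr)
    assume "rng n k \<inter> rng n k' \<noteq> {}"
    then obtain c where c: "c \<in> rng n k" "c \<in> rng n k'" by blast
    have "real (Suc k) / real n \<le> real k' / real n" if "k < k'" for k k' :: nat
      using that n by (simp add: divide_right_mono)
    moreover have "real (Suc k') / real n \<le> real k / real n" if "k' < k"
      using that n by (simp add: divide_right_mono)
    ultimately show False using c kk mem_rng[OF n] by (meson linorder_neqE_nat not_less order_less_le_trans)
  qed
qed

lemma rng_Un: "n > 0 \<Longrightarrow> (\<Union>k. rng n k) = UNIV"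
proof -
  assume n: "n > 0"
  have "c \<in> (\<Union>k. rng n k)" for c
  proof -
    define k where "k = nat \<lfloor>real n * norm c ^ 2\<rfloor>"
    have kfl: "real k = of_int \<lfloor>real n * norm c ^ 2\<rfloor>" unfolding k_def by simp
    have k1: "real k / real n \<le> norm c ^ 2"
      using n kfl by (simp add: divide_le_eq mult.commute)
    have k2: "norm c ^ 2 < real (Suc k) / real n"
    proof -
      have "real n * norm c ^ 2 < real k + 1" using kfl by linarith
      then show ?thesis using n by (simp add: less_divide_eq mult.commute)
    qed
    show ?thesis using k1 k2 mem_rng[OF n] by blast
  qed
  then show ?thesis by blast
qed

lemma exp_limit_le:
  fixes a b :: real
  assumes h: "\<And>n::nat. n > 0 \<Longrightarrow> exp (- pi / real n) * a \<le> b" and a: "a \<ge> 0"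
  shows "a \<le> b"
proof (rule ccontr)
  assume "\<not> a \<le> b"
  then have ab: "a - b > 0" by simp
  obtain n :: nat where n: "pi * a / (a - b) < real n" using reals_Archimedean2 by blast
  have npos: "n > 0" using n ab a by (metis divide_nonneg_pos not_gr0 not_less of_nat_0 pi_ge_zero zero_le_mult_iff)
  have "pi * a < real n * (a - b)" using n ab by (simp add: divide_less_eq mult.commute)
  then have "pi * a / real n < a - b" using npos by (simp add: divide_less_eq mult.commute)
  moreover have "(1 - pi / real n) * a \<le> exp (- pi / real n) * a"
    using a exp_ge_add_one_self[of "- pi / real n"] by (intro mult_right_mono) auto
  ultimately show False using h[OF npos] by (simp add: algebra_simps)
qed

context upp begin

lemma LS_disj:
  assumes n: "n > 0"
  shows "disjoint_family (\<lambda>k. LS M PP n k S)"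
proof -
  have key: "LS M PP n k S \<inter> LS M PP n k' S = {}" if kk: "k < k'" for k k' :: nat
  proof (rule ccontr)
    assume "LS M PP n k S \<inter> LS M PP n k' S \<noteq> {}"
    then obtain w where w1: "w \<in> LS M PP n k S" and w2: "w \<in> LS M PP n k' S" by blast
    have ws: "w \<in> space M" using w1 unfolding LS_def by blast
    have "card (PP w \<inter> (rng n k \<inter> S)) = 1" using w1 unfolding LS_def count_in_def by blast
    then obtain d where d: "d \<in> PP w" "d \<in> rng n k" by (metis One_nat_def card_eq_SucD Int_iff insertI1)
    have "d \<in> dsk n k'" using d(2) dsk_mono[OF n, of "Suc k" k'] kk unfolding rng_def by auto
    moreover have "finite (PP w \<inter> (dsk n k' \<union> (rng n k' - S)))"
      by (rule locfin_bounded[OF lf[OF ws]]) (use dsk_bounded rng_bounded in \<open>auto intro: bounded_subset\<close>)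
    moreover have "card (PP w \<inter> (dsk n k' \<union> (rng n k' - S))) = 0" using w2 unfolding LS_def count_in_def by blast
    ultimately show False using d(1) by auto
  qed
  show ?thesis unfolding disjoint_family_on_def
    by (metis Int_commute key linorder_neqE_nat)
qed

lemma term_bound:
  assumes [measurable]: "S \<in> sets borel" and n: "n > 0"
  shows "ennreal (exp (- pi / real n)) * emeasure (density lborel (\<lambda>c. ennreal (gs c))) (rng n k \<inter> S)
         \<le> emeasure M (LS M PP n k S)"
proof -
  define B where "B = rng n k \<inter> S"
  have [measurable]: "B \<in> sets borel" unfolding B_def by simp
  have bB: "bounded B" unfolding B_def using rng_bounded by (auto intro: bounded_subset)
  have fin: "emeasure lborel B = ennreal (measure lborel B)"
    using fin_emeasure_bounded[of B] bB by (simp add: emeasure_eq_ennreal_measure)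
  have "emeasure (density lborel (\<lambda>c. ennreal (gs c))) B = (\<integral>\<^sup>+ x. ennreal (gs x) * indicator B x \<partial>lborel)"
    by (rule emeasure_density) auto
  also have "\<dots> \<le> (\<integral>\<^sup>+ x. ennreal (exp (- pi * real k / real n)) * indicator B x \<partial>lborel)"
  proof (rule nn_integral_mono)
    fix x
    show "ennreal (gs x) * indicator B x \<le> ennreal (exp (- pi * real k / real n)) * indicator B x"
    proof (cases "x \<in> B")
      case True
      then have "real k / real n \<le> norm x ^ 2" using mem_rng[OF n] unfolding B_def by blast
      then have "pi * (real k / real n) \<le> pi * norm x ^ 2" by (rule mult_left_mono) simp
      then have "gs x \<le> exp (- pi * real k / real n)" unfolding gs_norm
        by simp
      then show ?thesis using True by (simp add: ennreal_leI)
    qed simp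
  qed
  also have "\<dots> = ennreal (exp (- pi * real k / real n)) * emeasure lborel B"
    by (rule nn_integral_cmult_indicator) simp
  finally have le: "emeasure (density lborel (\<lambda>c. ennreal (gs c))) B \<le> ennreal (exp (- pi * real k / real n) * measure lborel B)"
    using fin by (simp add: ennreal_mult')
  have "ennreal (exp (- pi / real n)) * emeasure (density lborel (\<lambda>c. ennreal (gs c))) B
     \<le> ennreal (exp (- pi / real n)) * ennreal (exp (- pi * real k / real n) * measure lborel B)"
    by (rule mult_left_mono[OF le]) simp
  also have "\<dots> = ennreal (exp (- pi * real (Suc k) / real n) * measure lborel B)"
  proof -
    have "exp (- pi / real n) * (exp (- pi * real k / real n) * measure lborel B) =
          exp (- pi * real (Suc k) / real n) * measure lborel B"
      by (simp add: exp_add[symmetric] add_divide_distrib[symmetric] algebra_simps)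
    then show ?thesis by (simp add: ennreal_mult'[symmetric])
  qed
  also have "\<dots> = emeasure M (LS M PP n k S)"
    using LS_prob[of S n k] n LS_events[of S n k] by (simp add: emeasure_eq_measure B_def)
  finally show ?thesis unfolding B_def .
qed

lemma lower_bound:
  assumes [measurable]: "S \<in> sets borel" and n: "n > 0"
  shows "ennreal (exp (- pi / real n)) * emeasure (density lborel (\<lambda>c. ennreal (gs c))) S
         \<le> emeasure M {w\<in>space M. nearest_point PP w \<in> S}"
proof -
  let ?D = "density lborel (\<lambda>c. ennreal (gs c))"
  have "emeasure ?D S = emeasure ?D (\<Union>k. rng n k \<inter> S)" using rng_Un[OF n] by auto
  also have "\<dots> = (\<Sum>k. emeasure ?D (rng n k \<inter> S))"
    by (rule suminf_emeasure[symmetric]) (use rng_disj[OF n] in \<open>auto simp: disjoint_family_on_def\<close>)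
  finally have "ennreal (exp (- pi / real n)) * emeasure ?D S = (\<Sum>k. ennreal (exp (- pi / real n)) * emeasure ?D (rng n k \<inter> S))"
    by simp
  also have "\<dots> \<le> (\<Sum>k. emeasure M (LS M PP n k S))"
    by (intro suminf_le term_bound n) auto
  also have "\<dots> = emeasure M (\<Union>k. LS M PP n k S)"
    by (rule suminf_emeasure) (use LS_events LS_disj[OF n] in auto)
  also have "\<dots> \<le> emeasure M {w\<in>space M. nearest_point PP w \<in> S}"
  proof (rule emeasure_mono)
    show "(\<Union>k. LS M PP n k S) \<subseteq> {w\<in>space M. nearest_point PP w \<in> S}"
    proof
      fix w assume "w \<in> (\<Union>k. LS M PP n k S)"
      then obtain k where wk: "w \<in> LS M PP n k S" by blast
      obtain m where "n = Suc m" using n by (cases n) auto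
      then have wk': "w \<in> LS M PP (Suc m) k S" using wk by simp
      then have "w \<in> space M" unfolding LS_def by blast
      then show "w \<in> {w\<in>space M. nearest_point PP w \<in> S}"
        using LS_good[OF wk'] by blast
    qed
  qed (rule C_set_events, simp)
  finally show ?thesis .
qed

end

lemma dens_prob: "prob_space (density lborel (\<lambda>c. ennreal (gs c)))"
proof (rule prob_spaceI)
  show "emeasure (density lborel (\<lambda>c. ennreal (gs c))) (space (density lborel (\<lambda>c. ennreal (gs c)))) = 1"
  proof -
    have "emeasure (density lborel (\<lambda>c. ennreal (gs c))) UNIV = (\<integral>\<^sup>+ x. ennreal (gs x) * indicator UNIV x \<partial>lborel)"
      by (rule emeasure_density) auto
    then show ?thesis using nn_gs by simp
  qed
qed

context upp begin

lemma C_distr: "distr M lborel (nearest_point PP) = density lborel (\<lambda>c. ennreal (gs c))"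
proof (rule measure_eqI)
  let ?D = "density lborel (\<lambda>c. ennreal (gs c))"
  interpret D: prob_space ?D by (rule dens_prob)
  show "sets (distr M lborel (nearest_point PP)) = sets ?D" by simp
  fix A assume "A \<in> sets (distr M lborel (nearest_point PP))"
  then have A[measurable]: "A \<in> sets borel" by simp
  have Ac[measurable]: "- A \<in> sets borel" by simp
  have le: "D.prob B \<le> prob {w\<in>space M. nearest_point PP w \<in> B}" if B[measurable]: "B \<in> sets borel" for B
  proof (rule exp_limit_le)
    fix n :: nat assume n: "n > 0"
    have "ennreal (exp (- pi / real n)) * ennreal (D.prob B) \<le> ennreal (prob {w\<in>space M. nearest_point PP w \<in> B})"
      using lower_bound[OF B n] C_set_events[OF B] by (simp add: D.emeasure_eq_measure emeasure_eq_measure)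
    then show "exp (- pi / real n) * D.prob B \<le> prob {w\<in>space M. nearest_point PP w \<in> B}"
      by (simp add: ennreal_mult'[symmetric])
  qed simp
  have s1: "D.prob A + D.prob (- A) = 1"
    using D.prob_compl[of A] by (simp add: Compl_eq_Diff_UNIV)
  have s2: "prob {w\<in>space M. nearest_point PP w \<in> A} + prob {w\<in>space M. nearest_point PP w \<in> - A} = 1"
  proof -
    have "{w\<in>space M. nearest_point PP w \<in> - A} = space M - {w\<in>space M. nearest_point PP w \<in> A}" by auto
    then show ?thesis using prob_compl[OF C_set_events[OF A]] by simp
  qed
  have eq: "D.prob A = prob {w\<in>space M. nearest_point PP w \<in> A}"
    using le[OF A] le[OF Ac] s1 s2 by linarith
  have "emeasure (distr M lborel (nearest_point PP)) A = emeasure M (nearest_point PP -` A \<inter> space M)"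
    by (rule emeasure_distr[OF C_measurable]) simp
  also have "nearest_point PP -` A \<inter> space M = {w\<in>space M. nearest_point PP w \<in> A}" by auto
  also have "emeasure M \<dots> = ennreal (prob {w\<in>space M. nearest_point PP w \<in> A})"
    by (simp add: emeasure_eq_measure)
  also have "\<dots> = emeasure ?D A" using eq by (simp add: D.emeasure_eq_measure)
  finally show "emeasure (distr M lborel (nearest_point PP)) A = emeasure ?D A" .
qed

end

definition v2 :: "real \<times> real \<Rightarrow> real^2" where "v2 c = (\<chi> i. if i = 1 then fst c else snd c)"

lemma v2_nth[simp]: "v2 c $ 1 = fst c" "v2 c $ 2 = snd c"
  by (simp_all add: v2_def)
definition p2 :: "real^2 \<Rightarrow> real \<times> real" where "p2 y = (y$1, y$2)"

lemma p2_v2[simp]: "p2 (v2 c) = c" by (simp add: p2_def v2_def)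
lemma v2_p2[simp]: "v2 (p2 y) = y"
  unfolding p2_def v2_def by (simp add: vec_eq_iff forall_2)

lemma box_p2: "p2 -` box l u = box (v2 l) (v2 u)"
  by (cases l, cases u) (auto simp: mem_box_cart p2_def v2_def forall_2 mem_box Basis_prod_def)

lemma p2_meas[measurable]: "p2 \<in> borel_measurable borel"
  unfolding p2_def by (intro borel_measurable_continuous_onI continuous_intros)

lemma v2_meas[measurable]: "v2 \<in> borel_measurable borel"
  unfolding v2_def
  apply (intro borel_measurable_continuous_onI continuous_on_vec_lambda)
  subgoal for i by (cases "i = 1") (simp_all add: continuous_on_fst continuous_on_snd continuous_on_id)
  done

lemma lborel_p2: "distr lborel borel p2 = lborel"
proof (rule lborel_eqI[symmetric])
  fix l u :: "real \<times> real"
  assume lu: "\<And>b. b \<in> Basis \<Longrightarrow> l \<bullet> b \<le> u \<bullet> b"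
  have "emeasure (distr lborel borel p2) (box l u) = emeasure lborel (p2 -` box l u)"
    by (subst emeasure_distr) auto
  also have "\<dots> = emeasure lborel (box (v2 l) (v2 u))" by (simp add: box_p2)
  also have "\<dots> = (\<Prod>b\<in>Basis. (u - l) \<bullet> b)"
  proof -
    have l1: "fst l \<le> fst u" using lu[of "(1,0)"] by (cases l, cases u) (simp add: Basis_prod_def)
    have l2: "snd l \<le> snd u" using lu[of "(0,1)"] by (cases l, cases u) (simp add: Basis_prod_def)
    have b1: "(\<Prod>b\<in>Basis. (u - l) \<bullet> b) = (fst u - fst l) * (snd u - snd l)"
      by (cases l, cases u) (simp add: Basis_prod_def prod.union_disjoint)
    have H: "\<forall>b\<in>Basis. v2 l \<bullet> b \<le> v2 u \<bullet> b"
      using l1 l2 by (auto simp: Basis_vec_def inner_axis forall_2)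
    have pb: "(\<Prod>b\<in>Basis. (v2 u - v2 l) \<bullet> b) = (\<Prod>i\<in>UNIV. (v2 u - v2 l) $ i)"
      by (simp add: Basis_vec_def cart_eq_inner_axis axis_eq_axis prod.UNION_disjoint)
    have "emeasure lborel (box (v2 l) (v2 u)) = ennreal (\<Prod>b\<in>Basis. (v2 u - v2 l) \<bullet> b)"
      by (simp add: emeasure_lborel_box_eq H)
    also have "\<dots> = ennreal ((fst u - fst l) * (snd u - snd l))"
      unfolding pb by (simp add: UNIV_2)
    finally show ?thesis using b1 by simp
  qed
  finally show "emeasure (distr lborel borel p2) (box l u) = (\<Prod>b\<in>Basis. (u - l) \<bullet> b)" .
qed simp


lemma p2_linear: "bounded_linear p2"
proof -
  have "linear p2" by (auto simp: linear_iff p2_def)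
  then show ?thesis by (simp add: linear_conv_bounded_linear)
qed

lemma v2_linear: "bounded_linear v2"
proof -
  have "linear v2" by (auto simp: linear_iff v2_def vec_eq_iff)
  then show ?thesis using linear_conv_bounded_linear by blast
qed

lemma nn_p2:
  assumes "h \<in> borel_measurable borel"
  shows "(\<integral>\<^sup>+ x. h x \<partial>lborel) = (\<integral>\<^sup>+ y. h (p2 y) \<partial>lborel)"
proof -
  have "(\<integral>\<^sup>+ x. h x \<partial>lborel) = (\<integral>\<^sup>+ x. h x \<partial>(distr lborel borel p2))" by (simp add: lborel_p2)
  also have "\<dots> = (\<integral>\<^sup>+ y. h (p2 y) \<partial>lborel)"
    by (rule nn_integral_distr) (use assms in auto)
  finally show ?thesis .
qed

lemma p2_axis: "p2 (axis 1 1) = (1, 0)" "p2 (axis 2 1) = (0, 1)"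
  by (simp_all add: p2_def axis_def)

lemma cv_pair:
  fixes g :: "real \<times> real \<Rightarrow> real \<times> real" and g' :: "real \<times> real \<Rightarrow> real \<times> real \<Rightarrow> real \<times> real"
    and F :: "real \<times> real \<Rightarrow> real" and J :: "real \<times> real \<Rightarrow> real"
  assumes S[measurable]: "S \<in> sets borel"
    and gS[measurable]: "g ` S \<in> sets borel"
    and der: "\<And>x. x \<in> S \<Longrightarrow> (g has_derivative g' x) (at x within S)"
    and inj: "inj_on g S"
    and Fm[measurable]: "F \<in> borel_measurable borel" and F0: "\<And>x. 0 \<le> F x"
    and fin: "(\<integral>\<^sup>+ x. ennreal (F x) * indicator (g ` S) x \<partial>lborel) < \<infinity>"
    and J: "\<And>x. x \<in> S \<Longrightarrow> J x = \<bar>fst (g' x (1,0)) * snd (g' x (0,1)) - fst (g' x (0,1)) * snd (g' x (1,0))\<bar>"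
    and Rm[measurable]: "(\<lambda>x. ennreal (J x * F (g x)) * indicator S x) \<in> borel_measurable borel"
  shows "(\<integral>\<^sup>+ x. ennreal (F x) * indicator (g ` S) x \<partial>lborel) = (\<integral>\<^sup>+ x. ennreal (J x * F (g x)) * indicator S x \<partial>lborel)"
proof -
  define G where "G = (\<lambda>y. v2 (g (p2 y)))"
  define G' where "G' = (\<lambda>y h. v2 (g' (p2 y) (p2 h)))"
  define S2 where "S2 = p2 -` S"
  define F2 where "F2 = (\<lambda>y. F (p2 y))"
  have S2[measurable]: "S2 \<in> sets borel" unfolding S2_def using measurable_sets[OF p2_meas S] by simp
  have "surj p2" by (metis p2_v2 surjI)
  then have pS2: "p2 ` S2 = S" unfolding S2_def by (rule surj_image_vimage_eq)
  have GS2: "G ` S2 = p2 -` (g ` S)"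
  proof
    show "G ` S2 \<subseteq> p2 -` (g ` S)" unfolding G_def S2_def by auto
    show "p2 -` (g ` S) \<subseteq> G ` S2"
    proof
      fix y assume "y \<in> p2 -` (g ` S)"
      then obtain x where x: "x \<in> S" "p2 y = g x" by auto
      have "y = G (v2 x)" unfolding G_def using x by (metis v2_p2 p2_v2)
      moreover have "v2 x \<in> S2" unfolding S2_def using x by simp
      ultimately show "y \<in> G ` S2" by blast
    qed
  qed
  have GS2m[measurable]: "G ` S2 \<in> sets borel" unfolding GS2 using measurable_sets[OF p2_meas gS] by simp
  have L: "(\<integral>\<^sup>+ x. ennreal (F x) * indicator (g ` S) x \<partial>lborel) = (\<integral>\<^sup>+ y. ennreal (F2 y) * indicator (G ` S2) y \<partial>lborel)"
    by (subst nn_p2) (auto simp: GS2 F2_def indicator_def)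
  obtain r where r: "(\<integral>\<^sup>+ x. ennreal (F x) * indicator (g ` S) x \<partial>lborel) = ennreal r" "0 \<le> r"
    using fin by (cases "(\<integral>\<^sup>+ x. ennreal (F x) * indicator (g ` S) x \<partial>lborel)" rule: ennreal_cases) auto
  have "((\<lambda>y. indicator (G ` S2) y * F2 y) has_integral r) UNIV"
  proof (rule nn_integral_has_integral)
    show "(\<lambda>y. indicator (G ` S2) y * F2 y) \<in> borel_measurable borel" unfolding F2_def by measurable
    show "\<And>x. 0 \<le> indicator (G ` S2) x * F2 x" using F0 by (simp add: F2_def)
    show "(\<integral>\<^sup>+ x. ennreal (indicator (G ` S2) x * F2 x) \<partial>lborel) = ennreal r"
    proof -
      have "(\<integral>\<^sup>+ x. ennreal (indicator (G ` S2) x * F2 x) \<partial>lborel) = (\<integral>\<^sup>+ y. ennreal (F2 y) * indicator (G ` S2) y \<partial>lborel)"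
        by (rule nn_integral_cong) (simp add: indicator_def)
      then show ?thesis using L r by simp
    qed
  qed fact
  moreover have "(\<lambda>y. indicator (G ` S2) y * F2 y) = (\<lambda>y. if y \<in> G ` S2 then F2 y else 0)"
    by (auto simp: indicator_def)
  ultimately have hi: "(F2 has_integral r) (G ` S2)"
    by (simp add: has_integral_restrict_UNIV)
  have ai: "F2 absolutely_integrable_on (G ` S2)"
    by (rule nonnegative_absolutely_integrable_1) (use hi F0 in \<open>auto simp: F2_def\<close>)
  have derG: "(G has_derivative G' y) (at y within S2)" if y: "y \<in> S2" for y
  proof -
    have d1: "(p2 has_derivative p2) (at y within S2)" by (rule bounded_linear.has_derivative[OF p2_linear]) (rule has_derivative_ident)
    have d2: "(g has_derivative g' (p2 y)) (at (p2 y) within p2 ` S2)"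
      using der[of "p2 y"] y pS2 unfolding S2_def by simp
    have d3: "((\<lambda>x. g (p2 x)) has_derivative (\<lambda>h. g' (p2 y) (p2 h))) (at y within S2)"
      by (rule has_derivative_in_compose[OF d1 d2])
    show ?thesis unfolding G_def G'_def by (rule bounded_linear.has_derivative[OF v2_linear d3])
  qed
  have injG: "inj_on G S2"
  proof (rule inj_onI)
    fix y1 y2 assume y: "y1 \<in> S2" "y2 \<in> S2" "G y1 = G y2"
    then have "p2 (G y1) = p2 (G y2)" by simp
    then have "g (p2 y1) = g (p2 y2)" unfolding G_def by simp
    then have "p2 y1 = p2 y2" using inj y unfolding S2_def inj_on_def by blast
    then have "v2 (p2 y1) = v2 (p2 y2)" by simp
    then show "y1 = y2" by simp
  qed
  have detG: "\<bar>det (matrix (G' y))\<bar> = J (p2 y)" if y: "y \<in> S2" for y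
  proof -
    have "det (matrix (G' y)) = fst (g' (p2 y) (1,0)) * snd (g' (p2 y) (0,1)) - fst (g' (p2 y) (0,1)) * snd (g' (p2 y) (1,0))"
      by (simp add: det_2 matrix_def G'_def p2_axis)
    then show ?thesis using J[of "p2 y"] y unfolding S2_def by simp
  qed
  have S2l: "S2 \<in> sets lebesgue" using S2 by (metis sets_completionI_sets sets_lborel)
  let ?h = "\<lambda>x. \<bar>det (matrix (G' x))\<bar> *\<^sub>R (vec (F2 (G x)) :: real^1)"
  have cv: "?h absolutely_integrable_on S2 \<and> integral S2 ?h = (vec r :: real^1)
       \<longleftrightarrow> (\<lambda>y. vec (F2 y) :: real^1) absolutely_integrable_on (G ` S2) \<and> integral (G ` S2) (\<lambda>y. vec (F2 y) :: real^1) = vec r"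
    by (rule has_absolute_integral_change_of_variables[OF S2l derG injG])
  have rhs: "(\<lambda>y. vec (F2 y) :: real^1) absolutely_integrable_on (G ` S2) \<and> integral (G ` S2) (\<lambda>y. vec (F2 y) :: real^1) = vec r"
    using ai hi by (simp add: absolutely_integrable_on_1_iff integral_on_1_eq integral_unique)
  from cv rhs have lhs: "?h absolutely_integrable_on S2" "integral S2 ?h = vec r" by blast+
  let ?k = "\<lambda>x. \<bar>det (matrix (G' x))\<bar> * F2 (G x)"
  have hk: "(\<lambda>x. ?h x $ 1) = ?k" by (rule ext) (simp only: vector_scaleR_component vec_component real_scaleR_def)
  have k1: "?k absolutely_integrable_on S2" using lhs(1) unfolding absolutely_integrable_on_1_iff hk .
  have i1: "integral S2 ?h = vec (integral S2 ?k)" unfolding integral_on_1_eq[of S2 ?h] hk ..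
  have e: "vec (integral S2 ?k) = (vec r :: real^1)" using i1 lhs(2) by (rule trans[OF sym])
  have "integral S2 ?k = r" using arg_cong[OF e, of "\<lambda>v. v $ 1"] by (simp only: vec_component)
  moreover have "?k integrable_on S2" using k1 unfolding absolutely_integrable_on_def by blast
  ultimately have k2: "(?k has_integral r) S2"
    using has_integral_integral by blast
  have "(\<integral>\<^sup>+ x. ennreal (?k x) * indicator S2 x \<partial>lborel) = ennreal r"
    by (rule nn_integral_has_integral_lebesgue'[OF _ k2]) (use F0 in \<open>simp add: F2_def\<close>)
  also have "(\<integral>\<^sup>+ x. ennreal (?k x) * indicator S2 x \<partial>lborel) = (\<integral>\<^sup>+ y. ennreal (J (p2 y) * F (g (p2 y))) * indicator S (p2 y) \<partial>lborel)"
  proof (rule nn_integral_cong)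
    fix y
    show "ennreal (?k y) * indicator S2 y = ennreal (J (p2 y) * F (g (p2 y))) * indicator S (p2 y)"
    proof (cases "y \<in> S2")
      case True
      then show ?thesis using detG[OF True] by (simp add: F2_def G_def S2_def)
    next
      case False
      then show ?thesis by (simp add: S2_def)
    qed
  qed
  also have "\<dots> = (\<integral>\<^sup>+ x. ennreal (J x * F (g x)) * indicator S x \<partial>lborel)"
    by (rule nn_p2[symmetric]) (rule Rm)
  finally show ?thesis using r by simp
qed

definition Phi :: "real \<times> real \<Rightarrow> real \<times> real" where
  "Phi c = (vertex_angle ptB ptA c, vertex_angle ptA ptB c)"

definition Psi :: "real \<times> real \<Rightarrow> real \<times> real" where
  "Psi x = (sin (fst x - snd x) / (2 * sin (fst x + snd x)), sin (fst x) * sin (snd x) / sin (fst x + snd x))"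

definition Dlt :: "(real \<times> real) set" where
  "Dlt = {x. 0 < fst x \<and> 0 < snd x \<and> fst x + snd x < pi}"

lemma VA_B: "vertex_angle ptB ptA (u, v) = arccos ((1/2 - u) / sqrt ((1/2 - u)^2 + v^2))"
proof -
  have "(ptA - ptB) \<bullet> ((u, v) - ptB) = 1/2 - u" by (simp add: ptA_def ptB_def inner_Pair)
  moreover have "norm (ptA - ptB) = 1" by (simp add: ptA_def ptB_def norm_Pair)
  moreover have "norm ((u, v) - ptB) = sqrt ((1/2 - u)^2 + v^2)"
    by (simp add: ptB_def norm_Pair power2_commute)
  ultimately show ?thesis unfolding vertex_angle_def by simp
qed

lemma VA_A: "vertex_angle ptA ptB (u, v) = arccos ((u + 1/2) / sqrt ((u + 1/2)^2 + v^2))"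
proof -
  have "(ptB - ptA) \<bullet> ((u, v) - ptA) = u + 1/2" by (simp add: ptA_def ptB_def inner_Pair)
  moreover have "norm (ptB - ptA) = 1" by (simp add: ptA_def ptB_def norm_Pair)
  moreover have "norm ((u, v) - ptA) = sqrt ((u + 1/2)^2 + v^2)"
    by (simp add: ptA_def norm_Pair)
  ultimately show ?thesis unfolding vertex_angle_def by simp
qed

lemma Phi_refl: "Phi (u, - v) = Phi (u, v)"
  unfolding Phi_def VA_A VA_B by simp

lemma arccos_ratio:
  assumes k: "0 < k" and t: "0 \<le> t" "t \<le> pi"
  shows "arccos ((k * cos t) / sqrt ((k * cos t)^2 + (k * sin t)^2)) = t"
proof -
  have "(k * cos t)^2 + (k * sin t)^2 = k^2" 
    by (simp add: power_mult_distrib distrib_left[symmetric])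
  then have "sqrt ((k * cos t)^2 + (k * sin t)^2) = k" using k by simp
  then show ?thesis using k t by (simp add: arccos_cos)
qed

lemma F1:
  assumes x: "x \<in> Dlt"
  shows "snd (Psi x) > 0 \<and> Phi (Psi x) = x"
proof -
  obtain a b where ab: "x = (a, b)" by (cases x)
  have a: "0 < a" and b: "0 < b" and abpi: "a + b < pi" using x ab by (auto simp: Dlt_def)
  have sa: "sin a > 0" using a abpi b by (intro sin_gt_zero) auto
  have sb: "sin b > 0" using a abpi b by (intro sin_gt_zero) auto
  have s: "sin (a + b) > 0" using a abpi b by (intro sin_gt_zero) auto
  define u where "u = sin (a - b) / (2 * sin (a + b))"
  define v where "v = sin a * sin b / sin (a + b)"
  have P: "Psi x = (u, v)" unfolding Psi_def u_def v_def ab by simp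
  have vpos: "v > 0" unfolding v_def using sa sb s by simp
  have e1: "1/2 - u = (sin b / sin (a + b)) * cos a"
    unfolding u_def using s by (simp add: field_simps sin_add sin_diff)
  have e2: "v = (sin b / sin (a + b)) * sin a" unfolding v_def by simp
  have e3: "u + 1/2 = (sin a / sin (a + b)) * cos b"
    unfolding u_def using s by (simp add: field_simps sin_add sin_diff)
  have e4: "v = (sin a / sin (a + b)) * sin b" unfolding v_def by simp
  have "vertex_angle ptB ptA (u, v) = a"
    unfolding VA_B e1 using arccos_ratio[of "sin b / sin (a + b)" a] e2 sb s a abpi b by simp
  moreover have "vertex_angle ptA ptB (u, v) = b"
    unfolding VA_A e3 using arccos_ratio[of "sin a / sin (a + b)" b] e4 sa s a abpi b by simp
  ultimately show ?thesis using P vpos ab by (simp add: Phi_def)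
qed


lemma arccos_facts:
  fixes p v :: real
  assumes v: "v > 0"
  defines "A \<equiv> sqrt (p^2 + v^2)"
  shows "A > 0" "0 < arccos (p / A)" "arccos (p / A) < pi" "cos (arccos (p / A)) = p / A"
        "sin (arccos (p / A)) = v / A"
proof -
  have pv: "p^2 < p^2 + v^2" using v by simp
  show Ap: "A > 0" unfolding A_def using v by (simp add: add_nonneg_pos)
  have "\<bar>p\<bar> < A" unfolding A_def using pv
    by (metis abs_ge_zero real_sqrt_abs real_sqrt_less_mono)
  then have lt: "-1 < p / A" "p / A < 1" using Ap by (auto simp: divide_less_eq less_divide_eq abs_less_iff)
  show "0 < arccos (p / A)" "arccos (p / A) < pi" using arccos_lt_bounded[OF lt] by auto
  show "cos (arccos (p / A)) = p / A" using lt by simp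
  have AA: "A^2 = p^2 + v^2" unfolding A_def by simp
  have "1 - (p / A)^2 = (A^2 - p^2) / A^2" using Ap by (simp add: field_simps)
  also have "\<dots> = (v / A)^2" using AA by (simp add: power_divide)
  finally have "1 - (p / A)^2 = (v / A)^2" .
  then have "sqrt (1 - (p / A)^2) = v / A" using v Ap by simp
  then show "sin (arccos (p / A)) = v / A" using lt by (simp add: sin_arccos)
qed

lemma F2:
  assumes v: "v > 0"
  shows "Phi (u, v) \<in> Dlt \<and> Psi (Phi (u, v)) = (u, v)"
proof -
  define p where "p = 1/2 - u"
  define q where "q = u + 1/2"
  define A where "A = sqrt (p^2 + v^2)"
  define B where "B = sqrt (q^2 + v^2)"
  define a where "a = arccos (p / A)"
  define b where "b = arccos (q / B)"
  note fa = arccos_facts[OF v, of p, folded A_def, folded a_def]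
  note fb = arccos_facts[OF v, of q, folded B_def, folded b_def]
  have Ph: "Phi (u, v) = (a, b)" unfolding Phi_def VA_A VA_B a_def b_def A_def B_def p_def q_def by simp
  have pq: "p + q = 1" unfolding p_def q_def by simp
  have sab: "sin (a + b) = v / (A * B)"
  proof -
    have "sin (a + b) = (v / A) * (q / B) + (p / A) * (v / B)" using fa fb by (simp add: sin_add)
    also have "\<dots> = v * (p + q) / (A * B)" using fa(1) fb(1) by (simp add: field_simps)
    finally show ?thesis using pq by simp
  qed
  have spos: "sin (a + b) > 0" using sab fa fb v by simp
  have "a + b < pi"
  proof (rule ccontr)
    assume "\<not> a + b < pi"
    then have "sin (a + b) \<le> 0" using fa fb by (intro sin_le_zero) auto
    then show False using spos by simp
  qed
  then have inD: "(a, b) \<in> Dlt" using fa fb by (simp add: Dlt_def)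
  have sdiff: "sin (a - b) = v * (q - p) / (A * B)"
  proof -
    have "sin (a - b) = (v / A) * (q / B) - (p / A) * (v / B)" using fa fb by (simp add: sin_diff)
    also have "\<dots> = v * (q - p) / (A * B)" using fa(1) fb(1) by (simp add: field_simps)
    finally show ?thesis .
  qed
  have "Psi (a, b) = (u, v)"
  proof -
    have "sin (a - b) / (2 * sin (a + b)) = u"
      unfolding sdiff sab using fa fb v by (simp add: field_simps p_def q_def)
    moreover have "sin a * sin b / sin (a + b) = v"
      unfolding sab using fa fb v by (simp add: field_simps power2_eq_square)
    ultimately show ?thesis by (simp add: Psi_def)
  qed
  then show ?thesis using inD Ph by simp
qed


lemma I1: fixes a b :: real shows "sin (a+b) * cos (a-b) - cos (a+b) * sin (a-b) = 2 * sin b * cos b"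
proof -
  have "sin ((a+b) - (a-b)) = sin (a+b) * cos (a-b) - cos (a+b) * sin (a-b)" by (rule sin_diff)
  moreover have "(a+b) - (a-b) = 2 * b" by simp
  ultimately show ?thesis by (simp add: sin_double)
qed

lemma I2: fixes a b :: real shows "sin (a+b) * cos (a-b) + cos (a+b) * sin (a-b) = 2 * sin a * cos a"
proof -
  have "sin ((a+b) + (a-b)) = sin (a+b) * cos (a-b) + cos (a+b) * sin (a-b)" by (rule sin_add)
  moreover have "(a+b) + (a-b) = 2 * a" by simp
  ultimately show ?thesis by (simp add: sin_double)
qed

lemma I3: fixes a b :: real shows "sin (a+b) * cos a - cos (a+b) * sin a = sin b"
  using sin_diff[of "a+b" a] by simp

lemma I4: fixes a b :: real shows "sin (a+b) * cos b - cos (a+b) * sin b = sin a"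
  using sin_diff[of "a+b" b] by simp

definition Psi' :: "real \<times> real \<Rightarrow> real \<times> real \<Rightarrow> real \<times> real" where
  "Psi' x h = ((sin (snd x) * cos (snd x) * fst h - sin (fst x) * cos (fst x) * snd h) / (sin (fst x + snd x))^2,
               ((sin (snd x))^2 * fst h + (sin (fst x))^2 * snd h) / (sin (fst x + snd x))^2)"

lemma Psi_deriv:
  assumes x: "x \<in> Dlt"
  shows "(Psi has_derivative Psi' x) (at x within X)"
proof -
  obtain a b where ab: "x = (a, b)" by (cases x)
  have a: "0 < a" and b: "0 < b" and abpi: "a + b < pi" using x ab by (auto simp: Dlt_def)
  have s: "sin (a + b) > 0" using a abpi b by (intro sin_gt_zero) auto
  have df: "((\<lambda>x. sin (fst x - snd x)) has_derivative (\<lambda>h. cos (a - b) * (fst h - snd h))) (at (a,b) within X)"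
    by (auto intro!: derivative_eq_intros simp: algebra_simps)
  have dg: "((\<lambda>x. 2 * sin (fst x + snd x)) has_derivative (\<lambda>h. 2 * (cos (a + b) * (fst h + snd h)))) (at (a,b) within X)"
    by (auto intro!: derivative_eq_intros simp: algebra_simps)
  have d1: "((\<lambda>x. sin (fst x - snd x) / (2 * sin (fst x + snd x))) has_derivative
      (\<lambda>h. (sin b * cos b * fst h - sin a * cos a * snd h) / (sin (a + b))^2)) (at (a,b) within X)"
  proof (rule has_derivative_eq_rhs[OF has_derivative_divide[OF df dg]])
    show "2 * sin (fst (a, b) + snd (a, b)) \<noteq> 0" using s by simp
    show "(\<lambda>h. - sin (fst (a, b) - snd (a, b)) * (inverse (2 * sin (fst (a, b) + snd (a, b))) * (2 * (cos (a + b) * (fst h + snd h))) *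
               inverse (2 * sin (fst (a, b) + snd (a, b)))) + cos (a - b) * (fst h - snd h) / (2 * sin (fst (a, b) + snd (a, b)))) =
          (\<lambda>h. (sin b * cos b * fst h - sin a * cos a * snd h) / (sin (a + b))^2)"
    proof (rule ext)
      fix h :: "real \<times> real"
      have "- sin (a - b) * (inverse (2 * sin (a + b)) * (2 * (cos (a + b) * (fst h + snd h))) * inverse (2 * sin (a + b)))
            + cos (a - b) * (fst h - snd h) / (2 * sin (a + b))
          = (fst h * (sin (a+b) * cos (a-b) - cos (a+b) * sin (a-b)) - snd h * (sin (a+b) * cos (a-b) + cos (a+b) * sin (a-b))) / (2 * (sin (a + b))^2)"
        using s by (simp add: field_simps power2_eq_square)
      also have "\<dots> = (sin b * cos b * fst h - sin a * cos a * snd h) / (sin (a + b))^2"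
        unfolding I1 I2 using s by (simp add: field_simps)
      finally show "- sin (fst (a, b) - snd (a, b)) * (inverse (2 * sin (fst (a, b) + snd (a, b))) * (2 * (cos (a + b) * (fst h + snd h))) *
               inverse (2 * sin (fst (a, b) + snd (a, b)))) + cos (a - b) * (fst h - snd h) / (2 * sin (fst (a, b) + snd (a, b))) =
            (sin b * cos b * fst h - sin a * cos a * snd h) / (sin (a + b))^2" by simp
    qed
  qed
  have dn: "((\<lambda>x. sin (fst x) * sin (snd x)) has_derivative (\<lambda>h. cos a * fst h * sin b + sin a * (cos b * snd h))) (at (a,b) within X)"
    by (auto intro!: derivative_eq_intros simp: algebra_simps)
  have dd: "((\<lambda>x. sin (fst x + snd x)) has_derivative (\<lambda>h. cos (a + b) * (fst h + snd h))) (at (a,b) within X)"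
    by (auto intro!: derivative_eq_intros simp: algebra_simps)
  have d2: "((\<lambda>x. sin (fst x) * sin (snd x) / sin (fst x + snd x)) has_derivative
      (\<lambda>h. ((sin b)^2 * fst h + (sin a)^2 * snd h) / (sin (a + b))^2)) (at (a,b) within X)"
  proof (rule has_derivative_eq_rhs[OF has_derivative_divide[OF dn dd]])
    show "sin (fst (a, b) + snd (a, b)) \<noteq> 0" using s by simp
    show "(\<lambda>h. - (sin (fst (a, b)) * sin (snd (a, b))) * (inverse (sin (fst (a, b) + snd (a, b))) * (cos (a + b) * (fst h + snd h)) *
               inverse (sin (fst (a, b) + snd (a, b)))) + (cos a * fst h * sin b + sin a * (cos b * snd h)) / sin (fst (a, b) + snd (a, b))) =
          (\<lambda>h. ((sin b)^2 * fst h + (sin a)^2 * snd h) / (sin (a + b))^2)"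
    proof (rule ext)
      fix h :: "real \<times> real"
      have "- (sin a * sin b) * (inverse (sin (a + b)) * (cos (a + b) * (fst h + snd h)) * inverse (sin (a + b)))
             + (cos a * fst h * sin b + sin a * (cos b * snd h)) / sin (a + b)
          = (fst h * sin b * (sin (a+b) * cos a - cos (a+b) * sin a) + snd h * sin a * (sin (a+b) * cos b - cos (a+b) * sin b)) / (sin (a + b))^2"
        using s by (simp add: field_simps power2_eq_square)
      also have "\<dots> = ((sin b)^2 * fst h + (sin a)^2 * snd h) / (sin (a + b))^2"
        unfolding I3 I4 by (simp add: field_simps power2_eq_square)
      finally show "- (sin (fst (a, b)) * sin (snd (a, b))) * (inverse (sin (fst (a, b) + snd (a, b))) * (cos (a + b) * (fst h + snd h)) *
               inverse (sin (fst (a, b) + snd (a, b)))) + (cos a * fst h * sin b + sin a * (cos b * snd h)) / sin (fst (a, b) + snd (a, b)) =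
            ((sin b)^2 * fst h + (sin a)^2 * snd h) / (sin (a + b))^2" by simp
    qed
  qed
  have "((\<lambda>x. (sin (fst x - snd x) / (2 * sin (fst x + snd x)), sin (fst x) * sin (snd x) / sin (fst x + snd x))) has_derivative
        (\<lambda>h. ((sin b * cos b * fst h - sin a * cos a * snd h) / (sin (a + b))^2, ((sin b)^2 * fst h + (sin a)^2 * snd h) / (sin (a + b))^2))) (at (a,b) within X)"
    by (rule has_derivative_Pair[OF d1 d2])
  then show ?thesis unfolding ab Psi_def[abs_def] Psi'_def[abs_def] by simp
qed

definition Jac :: "real \<times> real \<Rightarrow> real" where
  "Jac x = sin (fst x) * sin (snd x) / (sin (fst x + snd x))^3"

lemma Jac_det:
  assumes x: "x \<in> Dlt"
  shows "Jac x = \<bar>fst (Psi' x (1,0)) * snd (Psi' x (0,1)) - fst (Psi' x (0,1)) * snd (Psi' x (1,0))\<bar>"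
proof -
  obtain a b where ab: "x = (a, b)" by (cases x)
  have a: "0 < a" and b: "0 < b" and abpi: "a + b < pi" using x ab by (auto simp: Dlt_def)
  have sa: "sin a > 0" using a abpi b by (intro sin_gt_zero) auto
  have sb: "sin b > 0" using a abpi b by (intro sin_gt_zero) auto
  have s: "sin (a + b) > 0" using a abpi b by (intro sin_gt_zero) auto
  have "fst (Psi' x (1,0)) * snd (Psi' x (0,1)) - fst (Psi' x (0,1)) * snd (Psi' x (1,0))
      = sin a * sin b * (sin a * cos b + cos a * sin b) / ((sin (a+b))^2 * (sin (a+b))^2)"
    unfolding ab Psi'_def using s by (simp add: field_simps power2_eq_square)
  also have "\<dots> = sin a * sin b * sin (a + b) / ((sin (a+b))^2 * (sin (a+b))^2)" by (simp add: sin_add)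
  also have "\<dots> = Jac x" unfolding ab Jac_def using s by (simp add: field_simps power2_eq_square power3_eq_cube)
  finally have "Jac x = fst (Psi' x (1,0)) * snd (Psi' x (0,1)) - fst (Psi' x (0,1)) * snd (Psi' x (1,0))" by simp
  moreover have "Jac x > 0" unfolding ab Jac_def using sa sb s by simp
  ultimately show ?thesis by simp
qed

lemma dens_id:
  assumes x: "x \<in> Dlt"
  shows "anchored_density x = 2 * (Jac x * gs (Psi x))"
proof -
  obtain a b where ab: "x = (a, b)" by (cases x)
  have a: "0 < a" and b: "0 < b" and abpi: "a + b < pi" using x ab by (auto simp: Dlt_def)
  have s: "sin (a + b) > 0" using a abpi b by (intro sin_gt_zero) auto
  have e: "- pi * ((sin (a - b) / (2 * sin (a + b)))^2 + (sin a * sin b / sin (a + b))^2)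
        = - (pi / 4) * ((sin (a - b))\<^sup>2 + 4 * (sin a)\<^sup>2 * (sin b)\<^sup>2) / (sin (a + b))\<^sup>2"
    using s by (simp add: field_simps power2_eq_square)
  show ?thesis unfolding ab anchored_density_def Jac_def gs_def Psi_def using a b abpi e
    by (simp add: algebra_simps)
qed


definition rho :: "real \<times> real \<Rightarrow> real \<times> real" where "rho c = (fst c, - snd c)"

lemma fst_bm[measurable]: "(fst :: real \<times> real \<Rightarrow> real) \<in> borel_measurable borel"
  by (intro borel_measurable_continuous_onI continuous_intros)
lemma snd_bm[measurable]: "(snd :: real \<times> real \<Rightarrow> real) \<in> borel_measurable borel"
  by (intro borel_measurable_continuous_onI continuous_intros)

lemma rho_meas[measurable]: "rho \<in> borel_measurable borel"
  unfolding rho_def by (intro borel_measurable_continuous_onI continuous_intros)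

lemma rho_rho[simp]: "rho (rho c) = c" by (simp add: rho_def)

lemma box_rho: "rho -` box l u = box (fst l, - snd u) (fst u, - snd l)"
  by (cases l, cases u) (auto simp: rho_def mem_box Basis_prod_def)

lemma emeasure_box_pair: "fst l \<le> fst u \<Longrightarrow> snd l \<le> snd u \<Longrightarrow>
   emeasure lborel (box l u) = ennreal ((fst u - fst l) * (snd u - snd l))"
  by (cases l, cases u) (simp add: emeasure_lborel_box_eq Basis_prod_def prod.union_disjoint)

lemma lborel_rho: "distr lborel borel rho = lborel"
proof (rule lborel_eqI[symmetric])
  fix l u :: "real \<times> real"
  assume lu: "\<And>b. b \<in> Basis \<Longrightarrow> l \<bullet> b \<le> u \<bullet> b"
  have l1: "fst l \<le> fst u" using lu[of "(1,0)"] by (cases l, cases u) (simp add: Basis_prod_def)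
  have l2: "snd l \<le> snd u" using lu[of "(0,1)"] by (cases l, cases u) (simp add: Basis_prod_def)
  have b1: "(\<Prod>b\<in>Basis. (u - l) \<bullet> b) = (fst u - fst l) * (snd u - snd l)"
    by (cases l, cases u) (simp add: Basis_prod_def prod.union_disjoint)
  have "emeasure (distr lborel borel rho) (box l u) = emeasure lborel (rho -` box l u)"
    by (subst emeasure_distr) auto
  also have "\<dots> = ennreal ((fst u - fst l) * (snd u - snd l))"
    unfolding box_rho using l1 l2 by (subst emeasure_box_pair) (auto simp: algebra_simps)
  finally show "emeasure (distr lborel borel rho) (box l u) = (\<Prod>b\<in>Basis. (u - l) \<bullet> b)" using b1 by simp
qed simp

lemma nn_rho:
  assumes "h \<in> borel_measurable borel"
  shows "(\<integral>\<^sup>+ x. h x \<partial>lborel) = (\<integral>\<^sup>+ y. h (rho y) \<partial>lborel)"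
proof -
  have "(\<integral>\<^sup>+ x. h x \<partial>lborel) = (\<integral>\<^sup>+ x. h x \<partial>(distr lborel borel rho))" by (simp add: lborel_rho)
  also have "\<dots> = (\<integral>\<^sup>+ y. h (rho y) \<partial>lborel)"
    by (rule nn_integral_distr) (use assms in auto)
  finally show ?thesis .
qed

lemma axis_null: "{c :: real \<times> real. snd c = 0} \<in> null_sets lborel"
proof -
  have eq: "{c :: real \<times> real. snd c = 0} = UNIV \<times> {0}" by auto
  have "emeasure (lborel \<Otimes>\<^sub>M lborel) ((UNIV :: real set) \<times> {0::real}) = emeasure lborel (UNIV :: real set) * emeasure lborel {0::real}"
    by (rule lborel.emeasure_pair_measure_Times) auto
  then have "emeasure lborel ((UNIV :: real set) \<times> {0::real}) = 0" by (simp add: lborel_prod)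
  moreover have "(UNIV :: real set) \<times> {0::real} \<in> sets borel" by (simp add: borel_prod[symmetric])
  ultimately show ?thesis unfolding eq by (simp add: null_sets_def)
qed

lemma Dlt_borel[measurable]: "Dlt \<in> sets borel"
  unfolding Dlt_def by measurable

lemma clamp_id: "\<bar>t\<bar> \<le> 1 \<Longrightarrow> max (-1) (min 1 t) = (t::real)"
  by (auto simp: abs_le_iff)

lemma vertex_angle_alt:
  "vertex_angle P Q R = arccos (max (-1) (min 1 (((Q - P) \<bullet> (R - P)) / (norm (Q - P) * norm (R - P)))))"
proof -
  have "\<bar>((Q - P) \<bullet> (R - P)) / (norm (Q - P) * norm (R - P))\<bar> \<le> 1"
  proof (cases "norm (Q - P) * norm (R - P) = 0")
    case True
    show ?thesis by (simp only: True div_by_0 abs_zero)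
  next
    case False
    have d: "norm (Q - P) * norm (R - P) > 0"
      using False norm_ge_zero[of "Q - P"] norm_ge_zero[of "R - P"] by (simp add: less_le)
    have cs: "\<bar>(Q - P) \<bullet> (R - P)\<bar> \<le> norm (Q - P) * norm (R - P)" by (rule Cauchy_Schwarz_ineq2)
    have "\<bar>((Q - P) \<bullet> (R - P)) / (norm (Q - P) * norm (R - P))\<bar> = \<bar>(Q - P) \<bullet> (R - P)\<bar> / (norm (Q - P) * norm (R - P))"
      using d by (simp only: abs_divide abs_of_pos)
    also have "\<dots> \<le> 1" using d cs by (simp only: divide_le_eq_1_pos)
    finally show ?thesis .
  qed
  then show ?thesis unfolding vertex_angle_def by (simp only: clamp_id)
qed

lemma arccos_clamp_cont: "continuous_on UNIV (\<lambda>t::real. arccos (max (-1) (min 1 t)))"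
proof (rule continuous_on_arccos)
  show "continuous_on UNIV (\<lambda>t::real. max (- 1) (min 1 t))"
    by (intro continuous_on_max continuous_on_min continuous_on_const continuous_on_id)
qed auto

lemma vertex_angle_meas[measurable]: "(\<lambda>c. vertex_angle P Q c) \<in> borel_measurable borel"
proof -
  have "(\<lambda>c. arccos (max (-1) (min 1 (((Q - P) \<bullet> (c - P)) / (norm (Q - P) * norm (c - P)))))) \<in> borel_measurable borel"
    using borel_measurable_continuous_onI[OF arccos_clamp_cont]
    by (rule measurable_compose[rotated]) measurable
  then show ?thesis unfolding vertex_angle_alt .
qed

lemma Phi_meas[measurable]: "Phi \<in> borel_measurable borel"
  unfolding Phi_def by measurable

lemma dens_meas[measurable]: "anchored_density \<in> borel_measurable borel"
  unfolding anchored_density_def by measurable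


lemma Psi_meas[measurable]: "Psi \<in> borel_measurable borel"
  unfolding Psi_def by measurable

lemma Jac_meas[measurable]: "Jac \<in> borel_measurable borel"
  unfolding Jac_def by measurable

lemma Hu_borel[measurable]: "{c :: real \<times> real. snd c > 0} \<in> sets borel" by measurable
lemma Hl_borel[measurable]: "{c :: real \<times> real. snd c < 0} \<in> sets borel" by measurable

lemma Phi_pre_borel[measurable]: "T \<in> sets borel \<Longrightarrow> Phi -` T \<in> sets borel"
  using measurable_sets[OF Phi_meas] by simp

lemma Psi_img: "Psi ` (T \<inter> Dlt) = Phi -` T \<inter> {c. snd c > 0}"
proof
  show "Psi ` (T \<inter> Dlt) \<subseteq> Phi -` T \<inter> {c. snd c > 0}" using F1 by auto
  show "Phi -` T \<inter> {c. snd c > 0} \<subseteq> Psi ` (T \<inter> Dlt)"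
  proof
    fix c assume c: "c \<in> Phi -` T \<inter> {c. snd c > 0}"
    obtain u v where uv: "c = (u, v)" by (cases c)
    have "v > 0" using c uv by simp
    then have "Phi c \<in> Dlt" "Psi (Phi c) = c" using F2 uv by auto
    then show "c \<in> Psi ` (T \<inter> Dlt)" using c by (metis IntI image_eqI vimageE IntD1)
  qed
qed

lemma upper:
  assumes T[measurable]: "T \<in> sets borel"
  shows "(\<integral>\<^sup>+ c. ennreal (gs c) * indicator (Phi -` T \<inter> {c. snd c > 0}) c \<partial>lborel) =
         (\<integral>\<^sup>+ x. ennreal (Jac x * gs (Psi x)) * indicator (T \<inter> Dlt) x \<partial>lborel)"
proof -
  have "(\<integral>\<^sup>+ c. ennreal (gs c) * indicator (Psi ` (T \<inter> Dlt)) c \<partial>lborel) =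
        (\<integral>\<^sup>+ x. ennreal (Jac x * gs (Psi x)) * indicator (T \<inter> Dlt) x \<partial>lborel)"
  proof (rule cv_pair)
    show "T \<inter> Dlt \<in> sets borel" by measurable
    show "Psi ` (T \<inter> Dlt) \<in> sets borel" unfolding Psi_img by measurable
    show "(Psi has_derivative Psi' x) (at x within T \<inter> Dlt)" if "x \<in> T \<inter> Dlt" for x
      using Psi_deriv that by blast
    show "inj_on Psi (T \<inter> Dlt)"
      by (rule inj_on_inverseI[where g = Phi]) (use F1 in blast)
    show "gs \<in> borel_measurable borel" by measurable
    show "0 \<le> gs x" for x by (simp add: gs_def)
    have "(\<integral>\<^sup>+ c. ennreal (gs c) * indicator (Psi ` (T \<inter> Dlt)) c \<partial>lborel) \<le> (\<integral>\<^sup>+ c. ennreal (gs c) \<partial>lborel)"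
      by (rule nn_integral_mono) (simp add: indicator_def)
    then have le1: "(\<integral>\<^sup>+ c. ennreal (gs c) * indicator (Psi ` (T \<inter> Dlt)) c \<partial>lborel) \<le> 1"
      using nn_gs by simp
    show "(\<integral>\<^sup>+ c. ennreal (gs c) * indicator (Psi ` (T \<inter> Dlt)) c \<partial>lborel) < \<infinity>"
      unfolding infinity_ennreal_def using le1 ennreal_one_less_top by (rule le_less_trans)
    show "Jac x = \<bar>fst (Psi' x (1, 0)) * snd (Psi' x (0, 1)) - fst (Psi' x (0, 1)) * snd (Psi' x (1, 0))\<bar>"
      if "x \<in> T \<inter> Dlt" for x using Jac_det that by blast
    show "(\<lambda>x. ennreal (Jac x * gs (Psi x)) * indicator (T \<inter> Dlt) x) \<in> borel_measurable borel"
      by measurable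
  qed
  then show ?thesis unfolding Psi_img .
qed

lemma lower:
  assumes T[measurable]: "T \<in> sets borel"
  shows "(\<integral>\<^sup>+ c. ennreal (gs c) * indicator (Phi -` T \<inter> {c. snd c < 0}) c \<partial>lborel) =
         (\<integral>\<^sup>+ c. ennreal (gs c) * indicator (Phi -` T \<inter> {c. snd c > 0}) c \<partial>lborel)"
proof -
  have "(\<integral>\<^sup>+ c. ennreal (gs c) * indicator (Phi -` T \<inter> {c. snd c < 0}) c \<partial>lborel) =
        (\<integral>\<^sup>+ c. ennreal (gs (rho c)) * indicator (Phi -` T \<inter> {c. snd c < 0}) (rho c) \<partial>lborel)"
    by (rule nn_rho) measurable
  also have "\<dots> = (\<integral>\<^sup>+ c. ennreal (gs c) * indicator (Phi -` T \<inter> {c. snd c > 0}) c \<partial>lborel)"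
  proof (rule nn_integral_cong)
    fix c :: "real \<times> real"
    obtain u v where uv: "c = (u, v)" by (cases c)
    have "Phi (rho c) = Phi c" unfolding uv rho_def by (simp add: Phi_refl)
    moreover have "gs (rho c) = gs c" unfolding uv rho_def gs_def by simp
    ultimately show "ennreal (gs (rho c)) * indicator (Phi -` T \<inter> {c. snd c < 0}) (rho c) =
                     ennreal (gs c) * indicator (Phi -` T \<inter> {c. snd c > 0}) c"
      by (simp add: indicator_def rho_def)
  qed
  finally show ?thesis .
qed

lemma total:
  assumes T[measurable]: "T \<in> sets borel"
  shows "(\<integral>\<^sup>+ c. ennreal (gs c) * indicator (Phi -` T) c \<partial>lborel) =
         (\<integral>\<^sup>+ x. ennreal (anchored_density x) * indicator T x \<partial>lborel)"
proof -
  have "(\<integral>\<^sup>+ c. ennreal (gs c) * indicator (Phi -` T) c \<partial>lborel) =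
        (\<integral>\<^sup>+ c. ennreal (gs c) * indicator (Phi -` T \<inter> {c. snd c > 0}) c +
                ennreal (gs c) * indicator (Phi -` T \<inter> {c. snd c < 0}) c \<partial>lborel)"
  proof (rule nn_integral_cong_AE)
    have "AE c in lborel. c \<notin> {c :: real \<times> real. snd c = 0}"
      using axis_null by (rule AE_not_in)
    then show "AE c in lborel. ennreal (gs c) * indicator (Phi -` T) c =
        ennreal (gs c) * indicator (Phi -` T \<inter> {c. snd c > 0}) c + ennreal (gs c) * indicator (Phi -` T \<inter> {c. snd c < 0}) c"
      by eventually_elim (auto simp: indicator_def)
  qed
  also have "\<dots> = (\<integral>\<^sup>+ c. ennreal (gs c) * indicator (Phi -` T \<inter> {c. snd c > 0}) c \<partial>lborel) +
                  (\<integral>\<^sup>+ c. ennreal (gs c) * indicator (Phi -` T \<inter> {c. snd c < 0}) c \<partial>lborel)"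
    by (rule nn_integral_add) measurable
  also have "\<dots> = 2 * (\<integral>\<^sup>+ x. ennreal (Jac x * gs (Psi x)) * indicator (T \<inter> Dlt) x \<partial>lborel)"
    unfolding lower[OF T] upper[OF T] by (simp add: mult_2)
  also have "\<dots> = (\<integral>\<^sup>+ x. 2 * (ennreal (Jac x * gs (Psi x)) * indicator (T \<inter> Dlt) x) \<partial>lborel)"
    by (rule nn_integral_cmult[symmetric]) measurable
  also have "\<dots> = (\<integral>\<^sup>+ x. ennreal (anchored_density x) * indicator T x \<partial>lborel)"
  proof (rule nn_integral_cong)
    fix x :: "real \<times> real"
    show "2 * (ennreal (Jac x * gs (Psi x)) * indicator (T \<inter> Dlt) x) = ennreal (anchored_density x) * indicator T x"
    proof (cases "x \<in> Dlt")
      case True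
      have "Jac x * gs (Psi x) \<ge> 0"
      proof -
        have "Jac x = \<bar>fst (Psi' x (1,0)) * snd (Psi' x (0,1)) - fst (Psi' x (0,1)) * snd (Psi' x (1,0))\<bar>"
          using Jac_det True by blast
        then show ?thesis by (simp add: gs_def)
      qed
      then show ?thesis using True dens_id[OF True]
        by (simp add: indicator_def ennreal_mult' mult.assoc)
    next
      case False
      then have "anchored_density x = 0" unfolding anchored_density_def Dlt_def by (auto split: prod.splits)
      then show ?thesis using False by (simp add: indicator_def)
    qed
  qed
  finally show ?thesis .
qed

lemma Phi_distr: "distr (density lborel (\<lambda>c. ennreal (gs c))) lborel Phi = density lborel (\<lambda>x. ennreal (anchored_density x))"
proof (rule measure_eqI)
  show "sets (distr (density lborel (\<lambda>c. ennreal (gs c))) lborel Phi) = sets (density lborel (\<lambda>x. ennreal (anchored_density x)))" by simp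
  fix T assume "T \<in> sets (distr (density lborel (\<lambda>c. ennreal (gs c))) lborel Phi)"
  then have T[measurable]: "T \<in> sets borel" by simp
  have "emeasure (distr (density lborel (\<lambda>c. ennreal (gs c))) lborel Phi) T = emeasure (density lborel (\<lambda>c. ennreal (gs c))) (Phi -` T)"
    by (subst emeasure_distr) auto
  also have "\<dots> = (\<integral>\<^sup>+ c. ennreal (gs c) * indicator (Phi -` T) c \<partial>lborel)"
    by (rule emeasure_density) auto
  also have "\<dots> = (\<integral>\<^sup>+ x. ennreal (anchored_density x) * indicator T x \<partial>lborel)" by (rule total[OF T])
  also have "\<dots> = emeasure (density lborel (\<lambda>x. ennreal (anchored_density x))) T"
    by (rule emeasure_density[symmetric]) auto
  finally show "emeasure (distr (density lborel (\<lambda>c. ennreal (gs c))) lborel Phi) T = emeasure (density lborel (\<lambda>x. ennreal (anchored_density x))) T" .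
qed


theorem mainTheorem15:
  fixes M :: "'w measure" and PP :: "'w \<Rightarrow> (real \<times> real) set"
  assumes "unit_poisson_pp M PP"
  shows "distributed M lborel
           (\<lambda>w. (vertex_angle ptB ptA (nearest_point PP w),
                 vertex_angle ptA ptB (nearest_point PP w)))
           (\<lambda>z. ennreal (anchored_density z))"
proof -
  interpret upp M PP by unfold_locales (rule assms)
  have X: "(\<lambda>w. (vertex_angle ptB ptA (nearest_point PP w), vertex_angle ptA ptB (nearest_point PP w))) = Phi \<circ> nearest_point PP"
    by (simp add: Phi_def o_def)
  have Pm: "Phi \<in> measurable lborel lborel" by simp
  have Xm: "Phi \<circ> nearest_point PP \<in> measurable M lborel"
    using measurable_comp[OF C_measurable Pm] .
  have "distr M lborel (Phi \<circ> nearest_point PP) = distr (distr M lborel (nearest_point PP)) lborel Phi"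
    by (rule distr_distr[symmetric, OF Pm C_measurable])
  also have "\<dots> = density lborel (\<lambda>z. ennreal (anchored_density z))"
    unfolding C_distr by (rule Phi_distr)
  finally show ?thesis unfolding X distributed_def using Xm by simp
qed


end
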